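(* Let $\mathcal I=\mathcal I_\ell$ be an intersection pattern such that whenever $(\mathcal S_1,\ldots,\mathcal S_\ell)\in\mathcal I$ one has $|\mathcal S_j|=k_j\ge2$ for every $1\le j\le\ell$. For each $j$, let $\xi_{k_j,r}$ be a functional satisfying the assumptions in the context. Let $\mathbf X$ be a tuple of $|\mathcal I|$ i.i.d. points in $\mathbb R^d$ with density $q$, where $q$ is bounded and continuous almost everywhere, and let $(\mathcal T_1,\ldots,\mathcal T_\ell)=\Pi_{\mathcal I}(\mathbf X)$. Then there is a constant $c\ge0$ such that \[ \lim_{r\to0}r^{-d(|\mathcal I|-\#_{\mathcal I})}\,\mathbb E\Big[\prod_{j=1}^\ell\xi_{k_j,r}(\mathcal T_j)\Big]=c. \]
   Context: Each $\xi_{k,r}$ ($r>0$) maps finite subsets of $\mathbb R^d$ to $[0,\infty)$, vanishes unless the set has exactly $k$ points, and satisfies: $\xi_{k,r}(\alpha\mathcal S+x)=\xi_{k,r/\alpha}(\mathcal S)$ for all $\alpha>0,x\in\mathbb R^d,r>0$; there is $r_{\max}>0$ with $\xi_{k,1}(\mathcal S)=0$ if $\operatorname{diam}\mathcal S>r_{\max}$; $\sup_{\mathcal S}|\xi_{k,1}(\mathcal S)|<\infty$; and there is a nonempty open $\mathcal N\subset(\mathbb R^d)^{k-1}$ with $\xi_{k,1}(0,\mathbf y)>0$ on $\mathcal N$. An intersection pattern $\mathcal I=\mathcal I_\ell$ is a family of natural numbers $(I_J)$ indexed by nonempty $J\subset[\ell]$; finite sets $\mathcal S_1,\ldots,\mathcal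 S_\ell$ obey it if $|(\bigcap_{j\in J}\mathcal S_j)\cap(\bigcap_{j\notin J}\mathcal S_j^c)|=I_J$ for all such $J$; $|\mathcal I|=\sum_J I_J$. $\Pi_{\mathcal I}(\mathbf x)$ splits a tuple $\mathbf x$ of $|\mathcal I|$ points into sets $(\mathcal T_1,\ldots,\mathcal T_\ell)$ obeying $\mathcal I$, in a fixed manner. $\#_{\mathcal I}$ is the number of connected components of the intersection graph of $\mathcal I$: the graph on $\{1,\ldots,\ell\}$ with an edge $\{i,j\}$ iff $|\mathcal T_i\cap\mathcal T_j|>0$. *)

theory Defs
  imports "HOL-Probability.Probability"
begin

text \<open>Index set [l] is rendered as {..<l} (0-based).
  The nonempty index subsets J of [l]: \<close>
definition nonempty_subsets :: "nat \<Rightarrow> nat set set" where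
  "nonempty_subsets l = {J. J \<subseteq> {..<l} \<and> J \<noteq> {}}"

definition pattern_size :: "nat \<Rightarrow> (nat set \<Rightarrow> nat) \<Rightarrow> nat" where
  "pattern_size l I = (\<Sum>J\<in>nonempty_subsets l. I J)"

text \<open>Intersection graph of I on {..<l}: i, j adjacent iff some J containing both
  has I_J > 0 (equivalently the split sets T_i, T_j intersect).\<close>
definition isect_edges :: "nat \<Rightarrow> (nat set \<Rightarrow> nat) \<Rightarrow> (nat \<times> nat) set" where
  "isect_edges l I = {(i, j). i < l \<and> j < l \<and>
      (\<exists>J\<in>nonempty_subsets l. i \<in> J \<and> j \<in> J \<and> 0 < I J)}"

definition num_components :: "nat \<Rightarrow> (nat set \<Rightarrow> nat) \<Rightarrow> nat" where
  "num_components l I = card ({..<l} // (isect_edges l I)\<^sup>*)"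

text \<open>The splitting map Pi_I in a fixed manner: a labelling lab assigns to each
  index i < |I| the block J = lab i it belongs to; a labelling is admissible for I
  when each block J receives exactly I_J indices.\<close>
definition admissible_labelling :: "nat \<Rightarrow> (nat set \<Rightarrow> nat) \<Rightarrow> (nat \<Rightarrow> nat set) \<Rightarrow> bool" where
  "admissible_labelling l I lab \<longleftrightarrow>
     (\<forall>i < pattern_size l I. lab i \<in> nonempty_subsets l) \<and>
     (\<forall>J\<in>nonempty_subsets l. card {i. i < pattern_size l I \<and> lab i = J} = I J)"

definition split_set :: "nat \<Rightarrow> (nat set \<Rightarrow> nat) \<Rightarrow> (nat \<Rightarrow> nat set) \<Rightarrow> nat \<Rightarrow> (nat \<Rightarrow> 'a) \<Rightarrow> 'a set" where
  "split_set l I lab j x = x ` {i. i < pattern_size l I \<and> j \<in> lab i}"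

definition admissible_functional :: "nat \<Rightarrow> (real \<Rightarrow> 'a::euclidean_space set \<Rightarrow> real) \<Rightarrow> bool" where
  "admissible_functional k \<xi> \<longleftrightarrow>
     (\<forall>r>0. \<forall>S. finite S \<longrightarrow> 0 \<le> \<xi> r S) \<and>
     (\<forall>r>0. \<forall>S. finite S \<longrightarrow> card S \<noteq> k \<longrightarrow> \<xi> r S = 0) \<and>
     (\<forall>\<alpha>>0. \<forall>x. \<forall>r>0. \<forall>S. finite S \<longrightarrow> \<xi> r ((\<lambda>y. \<alpha> *\<^sub>R y + x) ` S) = \<xi> (r / \<alpha>) S) \<and>
     (\<exists>rmax>0. \<forall>S. finite S \<longrightarrow> diameter S > rmax \<longrightarrow> \<xi> 1 S = 0) \<and>
     (\<exists>B. \<forall>S. finite S \<longrightarrow> \<bar>\<xi> 1 S\<bar> \<le> B) \<and>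
     (\<exists>N. openin (product_topology (\<lambda>_. euclidean) {..<k - 1}) N \<and> N \<noteq> {} \<and>
          (\<forall>y\<in>N. \<xi> 1 (insert 0 (y ` {..<k - 1})) > 0))"

end

theory Submission
  imports Defs
begin

lemma prod_sf: "product_sigma_finite (\<lambda>_::nat. (lborel :: 'a::euclidean_space measure))"
  unfolding product_sigma_finite_def by (auto intro: sigma_finite_lborel)

lemma meas_map:
  fixes \<Phi> :: "(nat \<Rightarrow> 'a::euclidean_space) \<Rightarrow> (nat \<Rightarrow> 'a)"
  assumes "\<And>i. i \<in> A \<Longrightarrow> (\<lambda>x. \<Phi> x i) \<in> borel_measurable (PiM A (\<lambda>_. lborel))"
    and "\<And>x i. x \<in> extensional A \<Longrightarrow> i \<notin> A \<Longrightarrow> \<Phi> x i = undefined"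
  shows "\<Phi> \<in> PiM A (\<lambda>_. lborel) \<rightarrow>\<^sub>M PiM A (\<lambda>_. (lborel :: 'a measure))"
proof -
  have "(\<lambda>\<omega> i. \<Phi> \<omega> i) \<in> PiM A (\<lambda>_. lborel) \<rightarrow>\<^sub>M PiM A (\<lambda>_. (lborel :: 'a measure))"
    using assms by (intro measurable_PiM_single') (auto simp: space_PiM PiE_def extensional_def)
  then show ?thesis by simp
qed

lemma cv1:
  fixes g :: "(nat \<Rightarrow> 'a::euclidean_space) \<Rightarrow> ennreal"
  assumes fin: "finite A" and aA: "a \<notin> A" and bA: "b \<in> A" and r: "r > 0"
    and g[measurable]: "g \<in> borel_measurable (PiM (insert a A) (\<lambda>_. lborel))"
  shows "(\<integral>\<^sup>+ x. g x \<partial>PiM (insert a A) (\<lambda>_. lborel)) =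
     ennreal (r ^ DIM('a)) * (\<integral>\<^sup>+ x. g (x(a := x b + r *\<^sub>R x a)) \<partial>PiM (insert a A) (\<lambda>_. lborel))"
proof -
  interpret product_sigma_finite "\<lambda>_::nat. (lborel :: 'a measure)" by (rule prod_sf)
  have ab: "b \<noteq> a" using aA bA by auto
  have mm: "(\<lambda>x. x(a := x b + r *\<^sub>R x a)) \<in> PiM (insert a A) (\<lambda>_. lborel) \<rightarrow>\<^sub>M PiM (insert a A) (\<lambda>_. (lborel :: 'a measure))"
    apply (rule meas_map)
    using bA aA by (auto simp: extensional_def)
  have m2: "(\<lambda>x. g (x(a := x b + r *\<^sub>R x a))) \<in> borel_measurable (PiM (insert a A) (\<lambda>_. lborel))"
    using measurable_compose[OF mm g] .
  have m3: "(\<lambda>x. ennreal (r ^ DIM('a)) * g (x(a := x b + r *\<^sub>R x a))) \<in> borel_measurable (PiM (insert a A) (\<lambda>_. lborel))"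
    using m2 by measurable
  have "ennreal (r ^ DIM('a)) * (\<integral>\<^sup>+ x. g (x(a := x b + r *\<^sub>R x a)) \<partial>PiM (insert a A) (\<lambda>_. lborel))
      = (\<integral>\<^sup>+ x. ennreal (r ^ DIM('a)) * g (x(a := x b + r *\<^sub>R x a)) \<partial>PiM (insert a A) (\<lambda>_. lborel))"
    using m2 by (simp add: nn_integral_cmult)
  also have "\<dots> = (\<integral>\<^sup>+ x. (\<integral>\<^sup>+ y. ennreal (r ^ DIM('a)) * g (x(a := x b + r *\<^sub>R y)) \<partial>lborel) \<partial>PiM A (\<lambda>_. lborel))"
    by (subst product_nn_integral_insert[OF fin aA m3]) (simp add: ab)
  finally have e1: "ennreal (r ^ DIM('a)) * (\<integral>\<^sup>+ x. g (x(a := x b + r *\<^sub>R x a)) \<partial>PiM (insert a A) (\<lambda>_. lborel))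
     = (\<integral>\<^sup>+ x. (\<integral>\<^sup>+ y. ennreal (r ^ DIM('a)) * g (x(a := x b + r *\<^sub>R y)) \<partial>lborel) \<partial>PiM A (\<lambda>_. lborel))" .
  moreover have "(\<integral>\<^sup>+ x. g x \<partial>PiM (insert a A) (\<lambda>_. lborel))
      = (\<integral>\<^sup>+ x. (\<integral>\<^sup>+ y. g (x(a := y)) \<partial>lborel) \<partial>PiM A (\<lambda>_. lborel))"
    by (subst product_nn_integral_insert[OF fin aA g]) simp
  moreover have "(\<integral>\<^sup>+ y. g (x(a := y)) \<partial>lborel) = (\<integral>\<^sup>+ y. ennreal (r ^ DIM('a)) * g (x(a := x b + r *\<^sub>R y)) \<partial>lborel)"
    if x: "x \<in> space (PiM A (\<lambda>_. lborel))" for x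
  proof -
    have hm: "(\<lambda>y. g (x(a := y))) \<in> borel_measurable borel"
      using measurable_comp[OF measurable_component_update g, OF x aA] unfolding comp_def by simp
    have "(\<integral>\<^sup>+ y. g (x(a := y)) \<partial>lborel) = (\<integral>\<^sup>+ y. g (x(a := y)) \<partial>density (distr lborel borel (\<lambda>y. x b + r *\<^sub>R y)) (\<lambda>_. \<bar>r\<bar>^DIM('a)))"
      using lborel_affine[of r "x b"] r by simp
    also have "\<dots> = (\<integral>\<^sup>+ y. ennreal (\<bar>r\<bar>^DIM('a)) * g (x(a := y)) \<partial>distr lborel borel (\<lambda>y. x b + r *\<^sub>R y))"
      using hm by (subst nn_integral_density) auto
    also have "\<dots> = (\<integral>\<^sup>+ y. ennreal (\<bar>r\<bar>^DIM('a)) * g (x(a := x b + r *\<^sub>R y)) \<partial>lborel)"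
      using hm by (subst nn_integral_distr) auto
    also have "\<dots> = (\<integral>\<^sup>+ y. ennreal (r ^ DIM('a)) * g (x(a := x b + r *\<^sub>R y)) \<partial>lborel)"
      using r by simp
    finally show ?thesis .
  qed
  ultimately show ?thesis
    using e1 by (metis (no_types, lifting) nn_integral_cong)
qed


definition Phi :: "nat set \<Rightarrow> (nat \<Rightarrow> nat) \<Rightarrow> real \<Rightarrow> (nat \<Rightarrow> 'a::real_vector) \<Rightarrow> nat \<Rightarrow> 'a" where
  "Phi N \<rho> r x = (\<lambda>i. if i \<in> N then x (\<rho> i) + r *\<^sub>R x i else x i)"

lemma meas_Phi:
  assumes "N \<subseteq> A" "\<And>i. i \<in> N \<Longrightarrow> \<rho> i \<in> A"
  shows "Phi N \<rho> r \<in> PiM A (\<lambda>_. lborel) \<rightarrow>\<^sub>M PiM A (\<lambda>_. (lborel :: 'a::euclidean_space measure))"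
proof (rule meas_map)
  fix i assume i: "i \<in> A"
  show "(\<lambda>x. Phi N \<rho> r x i) \<in> borel_measurable (PiM A (\<lambda>_. lborel))"
  proof (cases "i \<in> N")
    case True
    then have [simp]: "\<rho> i \<in> A" using assms by auto
    show ?thesis using True i unfolding Phi_def by simp measurable
  next
    case False
    show ?thesis using False i unfolding Phi_def by simp measurable
  qed
next
  fix x :: "nat \<Rightarrow> 'a" and i assume "x \<in> extensional A" "i \<notin> A"
  then show "Phi N \<rho> r x i = undefined" using assms unfolding Phi_def by (auto simp: extensional_def)
qed

lemma cvN:
  fixes g :: "(nat \<Rightarrow> 'a::euclidean_space) \<Rightarrow> ennreal"
  assumes fin: "finite A" and NA: "N \<subseteq> A" and rho: "\<And>i. i \<in> N \<Longrightarrow> \<rho> i \<in> A - N" and r: "r > 0"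
    and g: "g \<in> borel_measurable (PiM A (\<lambda>_. lborel))"
  shows "(\<integral>\<^sup>+ x. g x \<partial>PiM A (\<lambda>_. lborel)) =
     ennreal (r ^ (DIM('a) * card N)) * (\<integral>\<^sup>+ x. g (Phi N \<rho> r x) \<partial>PiM A (\<lambda>_. lborel))"
  using finite_subset[OF NA fin] NA rho g
proof (induction N arbitrary: g rule: finite_induct)
  case empty
  have "\<And>x::nat\<Rightarrow>'a. Phi {} \<rho> r x = x" by (auto simp: Phi_def)
  then show ?case by simp
next
  case (insert a N)
  have rhoN: "\<And>i. i \<in> N \<Longrightarrow> \<rho> i \<in> A - N" using insert.prems by auto
  have aA: "a \<in> A" and raA: "\<rho> a \<in> A - {a}" using insert.prems by auto
  have mP: "Phi N \<rho> r \<in> PiM A (\<lambda>_. lborel) \<rightarrow>\<^sub>M PiM A (\<lambda>_. (lborel :: 'a measure))"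
    using insert.prems rhoN by (intro meas_Phi) auto
  have gP: "(\<lambda>x. g (Phi N \<rho> r x)) \<in> borel_measurable (PiM A (\<lambda>_. lborel))"
    using measurable_compose[OF mP insert.prems(3)] by (simp add: comp_def)
  have IH: "(\<integral>\<^sup>+ x. g x \<partial>PiM A (\<lambda>_. lborel)) =
     ennreal (r ^ (DIM('a) * card N)) * (\<integral>\<^sup>+ x. g (Phi N \<rho> r x) \<partial>PiM A (\<lambda>_. lborel))"
    using insert.IH[OF _ rhoN insert.prems(3)] insert.prems by auto
  have AA: "insert a (A - {a}) = A" using aA by auto
  have c1: "(\<integral>\<^sup>+ x. g (Phi N \<rho> r x) \<partial>PiM A (\<lambda>_. lborel)) =
     ennreal (r ^ DIM('a)) * (\<integral>\<^sup>+ x. g (Phi N \<rho> r (x(a := x (\<rho> a) + r *\<^sub>R x a))) \<partial>PiM A (\<lambda>_. lborel))"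
    using cv1[of "A - {a}" a "\<rho> a" r "\<lambda>x. g (Phi N \<rho> r x)"] fin raA r gP unfolding AA by auto
  have c2: "Phi N \<rho> r (x(a := x (\<rho> a) + r *\<^sub>R x a)) = Phi (insert a N) \<rho> r x" for x :: "nat \<Rightarrow> 'a"
    using insert.prems insert.hyps unfolding Phi_def by (auto intro!: ext)
  show ?case
    unfolding IH c1 c2 using insert.hyps
    using r by (simp add: ennreal_mult'[symmetric] power_add mult.assoc[symmetric] mult.commute)
qed


lemma prod_ind_PiE:
  fixes f :: "nat \<Rightarrow> 'b \<Rightarrow> ennreal"
  assumes fin: "finite A" and x: "x \<in> extensional A"
  shows "(\<Prod>i\<in>A. f i (x i) * indicator (B i) (x i)) = (\<Prod>i\<in>A. f i (x i)) * indicator (PiE A B) x"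
proof (cases "\<forall>i\<in>A. x i \<in> B i")
  case True
  then have "x \<in> PiE A B" using x by (auto simp: PiE_def)
  then show ?thesis using True by (simp add: indicator_def)
next
  case False
  then obtain i where i: "i \<in> A" "x i \<notin> B i" by auto
  then have "x \<notin> PiE A B" by (auto simp: PiE_def)
  moreover have "(\<Prod>i\<in>A. f i (x i) * indicator (B i) (x i)) = 0"
    using prod.remove[OF fin i(1), of "\<lambda>i. f i (x i) * indicator (B i) (x i)"] i by simp
  ultimately show ?thesis by simp
qed

lemma PiM_density_eq:
  fixes q :: "'a::euclidean_space \<Rightarrow> real"
  assumes fin: "finite A" and qm: "q \<in> borel_measurable borel"
    and sf: "sigma_finite_measure (density lborel (\<lambda>z. ennreal (q z)))"
  shows "density (PiM A (\<lambda>_. lborel)) (\<lambda>x. \<Prod>i\<in>A. ennreal (q (x i))) = PiM A (\<lambda>_::nat. density lborel (\<lambda>z. ennreal (q z)))"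
proof -
  interpret P: product_sigma_finite "\<lambda>_::nat. density lborel (\<lambda>z. ennreal (q z))"
    unfolding product_sigma_finite_def using sf by auto
  interpret L: product_sigma_finite "\<lambda>_::nat. (lborel :: 'a measure)" by (rule prod_sf)
  have sD: "sets (density lborel (\<lambda>z. ennreal (q z))) = sets borel" by simp
  have sP: "sets (PiM A (\<lambda>_::nat. density lborel (\<lambda>z. ennreal (q z)))) = sets (PiM A (\<lambda>_::nat. (lborel :: 'a measure)))"
    by (intro sets_PiM_cong) auto
  have dm: "(\<lambda>x. \<Prod>i\<in>A. ennreal (q (x i))) \<in> borel_measurable (PiM A (\<lambda>_. (lborel :: 'a measure)))"
    using qm by measurable
  show ?thesis
  proof (rule P.PiM_eqI[OF fin])
    show "sets (density (Pi\<^sub>M A (\<lambda>_. lborel)) (\<lambda>x. \<Prod>i\<in>A. ennreal (q (x i)))) = sets (Pi\<^sub>M A (\<lambda>_. density lborel (\<lambda>z. ennreal (q z))))"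
      using sP by simp
  next
    fix B assume B: "\<And>i. i \<in> A \<Longrightarrow> B i \<in> sets (density lborel (\<lambda>z. ennreal (q z)))"
    then have B': "\<And>i. i \<in> A \<Longrightarrow> B i \<in> sets borel" by simp
    have PB: "PiE A B \<in> sets (PiM A (\<lambda>_. (lborel :: 'a measure)))"
      using B' by (intro sets_PiM_I_finite fin) auto
    have "emeasure (density (Pi\<^sub>M A (\<lambda>_. lborel)) (\<lambda>x. \<Prod>i\<in>A. ennreal (q (x i)))) (PiE A B)
        = (\<integral>\<^sup>+ x. (\<Prod>i\<in>A. ennreal (q (x i))) * indicator (PiE A B) x \<partial>PiM A (\<lambda>_. lborel))"
      using dm PB by (rule emeasure_density)
    also have "\<dots> = (\<integral>\<^sup>+ x. (\<Prod>i\<in>A. ennreal (q (x i)) * indicator (B i) (x i)) \<partial>PiM A (\<lambda>_. lborel))"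
      by (intro nn_integral_cong, subst prod_ind_PiE[OF fin]) (auto simp: space_PiM PiE_def)
    also have "\<dots> = (\<Prod>i\<in>A. (\<integral>\<^sup>+ z. ennreal (q z) * indicator (B i) z \<partial>lborel))"
      using B' qm by (intro L.product_nn_integral_prod[OF fin]) auto
    also have "\<dots> = (\<Prod>i\<in>A. emeasure (density lborel (\<lambda>z. ennreal (q z))) (B i))"
      using B' qm by (intro prod.cong refl, subst emeasure_density) auto
    finally show "emeasure (density (Pi\<^sub>M A (\<lambda>_. lborel)) (\<lambda>x. \<Prod>i\<in>A. ennreal (q (x i)))) (PiE A B)
        = (\<Prod>i\<in>A. emeasure (density lborel (\<lambda>z. ennreal (q z))) (B i))" .
  qed
qed


locale pat =
  fixes l :: nat and I :: "nat set \<Rightarrow> nat" and lab :: "nat \<Rightarrow> nat set"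
  assumes lab: "admissible_labelling l I lab"
begin

abbreviation "n \<equiv> pattern_size l I"
definition "Rel = {(i, i'). i < n \<and> i' < n \<and> (\<exists>j. j \<in> lab i \<and> j \<in> lab i')}"
definition "rho i = (LEAST i'. (i', i) \<in> Rel\<^sup>*)"
definition "S j = {i. i < n \<and> j \<in> lab i}"
abbreviation "E \<equiv> isect_edges l I"

lemma lab_ne: "i < n \<Longrightarrow> lab i \<in> nonempty_subsets l"
  using lab unfolding admissible_labelling_def by auto

lemma lab_card: "J \<in> nonempty_subsets l \<Longrightarrow> card {i. i < n \<and> lab i = J} = I J"
  using lab unfolding admissible_labelling_def by auto

lemma lab_sub: "i < n \<Longrightarrow> lab i \<subseteq> {..<l} \<and> lab i \<noteq> {}"
  using lab_ne unfolding nonempty_subsets_def by auto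

lemma I_pos: "i < n \<Longrightarrow> 0 < I (lab i)"
proof -
  assume i: "i < n"
  have "finite {t. t < n \<and> lab t = lab i}" by auto
  moreover have "i \<in> {t. t < n \<and> lab t = lab i}" using i by auto
  ultimately have "card {t. t < n \<and> lab t = lab i} > 0" by (auto simp: card_gt_0_iff)
  then show ?thesis using lab_card[OF lab_ne[OF i]] by simp
qed

lemma exists_index: "J \<in> nonempty_subsets l \<Longrightarrow> 0 < I J \<Longrightarrow> \<exists>t<n. lab t = J"
proof -
  assume J: "J \<in> nonempty_subsets l" and p: "0 < I J"
  then have "card {i. i < n \<and> lab i = J} > 0" using lab_card by simp
  then have "{i. i < n \<and> lab i = J} \<noteq> {}" by (metis card.empty less_irrefl)
  then show ?thesis by auto
qed

lemma sym_Rel: "sym Rel" unfolding Rel_def sym_def by auto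

lemma Rel_sym_rtr: "(i, i') \<in> Rel\<^sup>* \<Longrightarrow> (i', i) \<in> Rel\<^sup>*"
  using sym_Rel by (meson sym_rtrancl symD)

lemma rho_rel: "(rho i, i) \<in> Rel\<^sup>*"
  unfolding rho_def by (rule LeastI[of _ i]) simp

lemma rho_le: "rho i \<le> i"
  unfolding rho_def by (rule Least_le) simp

lemma rho_eq: "(i, i') \<in> Rel\<^sup>* \<Longrightarrow> rho i = rho i'"
proof -
  assume h: "(i, i') \<in> Rel\<^sup>*"
  have "(a, i) \<in> Rel\<^sup>* \<longleftrightarrow> (a, i') \<in> Rel\<^sup>*" for a
    using h Rel_sym_rtr by (meson rtrancl_trans)
  then show ?thesis unfolding rho_def by simp
qed

lemma rho_rho: "rho (rho i) = rho i"
  using rho_eq[OF rho_rel[of i]] by simp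

lemma rho_eq_iff: "rho i = rho i' \<longleftrightarrow> (i, i') \<in> Rel\<^sup>*"
proof
  assume "rho i = rho i'"
  then show "(i, i') \<in> Rel\<^sup>*"
    using rho_rel[of i] rho_rel[of i'] Rel_sym_rtr by (metis rtrancl_trans)
qed (rule rho_eq)

lemma rho_lt: "i < n \<Longrightarrow> rho i < n" using rho_le[of i] by simp

lemma S_rho: "i \<in> S j \<Longrightarrow> i' \<in> S j \<Longrightarrow> rho i = rho i'"
  by (rule rho_eq) (auto simp: S_def Rel_def)

lemma E_lab: "i < n \<Longrightarrow> j \<in> lab i \<Longrightarrow> j' \<in> lab i \<Longrightarrow> (j, j') \<in> E"
  using lab_sub[of i] I_pos[of i] lab_ne[of i] unfolding isect_edges_def by auto

lemma K1: "(i, i') \<in> Rel\<^sup>* \<Longrightarrow> i < n \<Longrightarrow> j \<in> lab i \<Longrightarrow> j' \<in> lab i' \<Longrightarrow> (j, j') \<in> E\<^sup>*"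
proof (induction i' arbitrary: j' rule: rtrancl_induct)
  case base
  then show ?case using E_lab by blast
next
  case (step y z)
  from step.hyps(2) obtain c where c: "c \<in> lab y" "c \<in> lab z" "y < n" "z < n" unfolding Rel_def by auto
  have "(j, c) \<in> E\<^sup>*" using step.IH step.prems c by auto
  moreover have "(c, j') \<in> E" using E_lab[OF c(4) c(2) step.prems(3)] .
  ultimately show ?case by auto
qed

lemma K2: "(j, j') \<in> E\<^sup>* \<Longrightarrow> i < n \<Longrightarrow> i' < n \<Longrightarrow> j \<in> lab i \<Longrightarrow> j' \<in> lab i' \<Longrightarrow> (i, i') \<in> Rel\<^sup>*"
proof (induction j' arbitrary: i' rule: rtrancl_induct)
  case base
  then show ?case unfolding Rel_def by auto
next
  case (step y z)
  from step.hyps(2) obtain J where J: "J \<in> nonempty_subsets l" "y \<in> J" "z \<in> J" "0 < I J"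
    unfolding isect_edges_def by auto
  obtain t where t: "t < n" "lab t = J" using exists_index[OF J(1) J(4)] by auto
  have "(i, t) \<in> Rel\<^sup>*" using step.IH[of t] step.prems t J by auto
  moreover have "(t, i') \<in> Rel" using t J step.prems unfolding Rel_def by auto
  ultimately show ?case by auto
qed

lemma E_sym: "sym E" unfolding isect_edges_def sym_def by auto

lemma Estar_class: "(a, b) \<in> E\<^sup>* \<Longrightarrow> E\<^sup>* `` {a} = E\<^sup>* `` {b}"
proof -
  assume h: "(a, b) \<in> E\<^sup>*"
  have s: "(x, y) \<in> E\<^sup>* \<Longrightarrow> (y, x) \<in> E\<^sup>*" for x y using E_sym by (meson sym_rtrancl symD)
  show ?thesis using h s by (auto intro: rtrancl_trans)
qed

definition "v i = Min (lab i)"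

lemma v_in: "i < n \<Longrightarrow> v i \<in> lab i \<and> v i < l"
  using lab_sub[of i] unfolding v_def
  by (metis Min_in finite_lessThan finite_subset lessThan_iff subsetD)

lemma card_roots:
  assumes kge: "\<forall>j<l. 2 \<le> (\<Sum>J\<in>{J\<in>nonempty_subsets l. j \<in> J}. I J)"
  shows "card {i. i < n \<and> rho i = i} = num_components l I"
proof -
  let ?f = "\<lambda>i. E\<^sup>* `` {v i}"
  have "bij_betw ?f {i. i < n \<and> rho i = i} ({..<l} // E\<^sup>*)"
  proof (rule bij_betw_imageI)
    show "inj_on ?f {i. i < n \<and> rho i = i}"
    proof (rule inj_onI)
      fix i i' assume i: "i \<in> {i. i < n \<and> rho i = i}" and i': "i' \<in> {i. i < n \<and> rho i = i}"
        and eq: "?f i = ?f i'"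
      have "v i' \<in> ?f i'" by simp
      then have "v i' \<in> ?f i" using eq by simp
      then have "(v i, v i') \<in> E\<^sup>*" by simp
      then have "(i, i') \<in> Rel\<^sup>*" using K2 i i' v_in by blast
      then show "i = i'" using rho_eq i i' by auto
    qed
  next
    show "?f ` {i. i < n \<and> rho i = i} = {..<l} // E\<^sup>*"
    proof
      show "?f ` {i. i < n \<and> rho i = i} \<subseteq> {..<l} // E\<^sup>*"
        using v_in by (auto simp: quotient_def)
    next
      show "{..<l} // E\<^sup>* \<subseteq> ?f ` {i. i < n \<and> rho i = i}"
      proof
        fix X assume "X \<in> {..<l} // E\<^sup>*"
        then obtain a where a: "a < l" "X = E\<^sup>* `` {a}" by (auto simp: quotient_def)
        have "(\<Sum>J\<in>{J\<in>nonempty_subsets l. a \<in> J}. I J) \<noteq> 0" using kge a by fastforce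
        then obtain J where J: "J \<in> nonempty_subsets l" "a \<in> J" "0 < I J"
          using sum.neutral by (metis (mono_tags, lifting) gr0I mem_Collect_eq)
        obtain t where t: "t < n" "lab t = J" using exists_index[OF J(1) J(3)] by auto
        let ?i = "rho t"
        have ii: "?i < n" "rho ?i = ?i" using rho_lt[OF t(1)] rho_rho by auto
        have "(v ?i, a) \<in> E\<^sup>*" using K1[OF rho_rel[of t] ii(1)] v_in[OF ii(1)] t J by auto
        then have "X = ?f ?i" using Estar_class a by simp
        then show "X \<in> ?f ` {i. i < n \<and> rho i = i}" using ii by auto
      qed
    qed
  qed
  then show ?thesis unfolding num_components_def by (rule bij_betw_same_card)
qed

lemma finite_ne: "finite (nonempty_subsets l)"
  unfolding nonempty_subsets_def by (rule finite_subset[of _ "Pow {..<l}"]) auto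

lemma card_S: "card (S j) = (\<Sum>J\<in>{J\<in>nonempty_subsets l. j \<in> J}. I J)"
proof -
  have "S j = (\<Union>J\<in>{J\<in>nonempty_subsets l. j \<in> J}. {i. i < n \<and> lab i = J})"
    using lab_ne unfolding S_def by auto
  moreover have "card (\<Union>J\<in>{J\<in>nonempty_subsets l. j \<in> J}. {i. i < n \<and> lab i = J}) = (\<Sum>J\<in>{J\<in>nonempty_subsets l. j \<in> J}. card {i. i < n \<and> lab i = J})"
    using finite_ne by (intro card_UN_disjoint) auto
  ultimately have "card (S j) = (\<Sum>J\<in>{J\<in>nonempty_subsets l. j \<in> J}. card {i. i < n \<and> lab i = J})" by simp
  also have "\<dots> = (\<Sum>J\<in>{J\<in>nonempty_subsets l. j \<in> J}. I J)"
    using lab_card by (intro sum.cong) auto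
  finally show ?thesis .
qed

end

lemma AE_PiM_comp:
  fixes P :: "'a::euclidean_space \<Rightarrow> bool"
  assumes fin: "finite A" and i: "i \<in> A" and ae: "AE z in lborel. P z"
  shows "AE x in PiM A (\<lambda>_::nat. lborel). P (x i)"
proof -
  interpret L: product_sigma_finite "\<lambda>_::nat. (lborel :: 'a measure)" by (rule prod_sf)
  obtain N0 where N0': "{z \<in> space lborel. \<not> P z} \<subseteq> N0" "emeasure lborel N0 = 0" "N0 \<in> sets lborel"
    using AE_E[OF ae] by blast
  then have N0: "{z \<in> space lborel. \<not> P z} \<subseteq> N0" "N0 \<in> null_sets lborel" by auto
  let ?B = "\<lambda>j. if j = i then N0 else (UNIV :: 'a set)"
  have B: "PiE A ?B \<in> sets (PiM A (\<lambda>_. (lborel :: 'a measure)))"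
    using N0 by (intro sets_PiM_I_finite fin) auto
  have "emeasure (PiM A (\<lambda>_. (lborel :: 'a measure))) (PiE A ?B) = (\<Prod>j\<in>A. emeasure lborel (?B j))"
    using N0 by (intro L.emeasure_PiM fin) auto
  also have "\<dots> = 0"
    using prod.remove[OF fin i, of "\<lambda>j. emeasure lborel (?B j)"] N0'(2) by simp
  finally have "PiE A ?B \<in> null_sets (PiM A (\<lambda>_. (lborel :: 'a measure)))" using B by auto
  moreover have "{x \<in> space (PiM A (\<lambda>_. (lborel :: 'a measure))). \<not> P (x i)} \<subseteq> PiE A ?B"
    using N0 i by (auto simp: space_PiM PiE_def)
  ultimately show ?thesis by (rule AE_I')
qed

locale mainl = pat l I lab for l I lab +
  fixes k :: "nat \<Rightarrow> nat" and xi :: "nat \<Rightarrow> real \<Rightarrow> 'a::euclidean_space set \<Rightarrow> real" and q :: "'a \<Rightarrow> real"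
  assumes k_def: "\<forall>j<l. k j = (\<Sum>J\<in>{J\<in>nonempty_subsets l. j \<in> J}. I J)"
    and k_ge2: "\<forall>j<l. 2 \<le> k j"
    and xi_adm: "\<forall>j<l. admissible_functional (k j) (xi (k j))"
    and xi_meas: "\<forall>j<l. \<forall>r>0.
        (\<lambda>y. xi (k j) r (y ` {..<k j})) \<in> borel_measurable (PiM {..<k j} (\<lambda>_. lborel))"
    and q_meas: "q \<in> borel_measurable lborel"
    and q_nonneg: "\<forall>x. 0 \<le> q x"
    and q_prob: "(\<integral>\<^sup>+ x. ennreal (q x) \<partial>lborel) = 1"
    and q_bdd: "\<exists>B. \<forall>x. q x \<le> B"
    and q_cont: "AE x in lborel. isCont q x"
begin

abbreviation "M \<equiv> PiM {..<n} (\<lambda>_::nat. (lborel :: 'a measure))"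
definition "R = {i. i < n \<and> rho i = i}"
definition "N = {i. i < n \<and> rho i \<noteq> i}"
definition "Y x = (\<lambda>i. if i \<in> R then 0 else x i)"
definition "F r x = (\<Prod>j<l. xi (k j) r (x ` S j))"
definition "G x = F 1 (Y x)"
definition "H r x = G x * (\<Prod>i<n. q (x (rho i) + r *\<^sub>R Y x i))"

lemma card_Sk: "j < l \<Longrightarrow> card (S j) = k j"
  using card_S k_def by auto

lemma S_sub: "S j \<subseteq> {..<n}" unfolding S_def by auto

lemma finite_S: "finite (S j)" using S_sub finite_subset by blast

lemma F_meas:
  assumes r: "r > 0"
  shows "F r \<in> borel_measurable M"
proof -
  have "(\<lambda>x. xi (k j) r (x ` S j)) \<in> borel_measurable M" if j: "j < l" for j
  proof -
    obtain e where e: "bij_betw e {0..<card (S j)} (S j)" using ex_bij_betw_nat_finite[OF finite_S] by auto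
    then have e': "bij_betw e {..<k j} (S j)" using card_Sk[OF j] by (simp add: atLeast0LessThan)
    define T where "T x = (\<lambda>t. if t < k j then x (e t) else undefined)" for x :: "nat \<Rightarrow> 'a"
    have Tm: "T \<in> M \<rightarrow>\<^sub>M PiM {..<k j} (\<lambda>_. (lborel :: 'a measure))"
    proof -
      have "(\<lambda>\<omega> t. T \<omega> t) \<in> M \<rightarrow>\<^sub>M PiM {..<k j} (\<lambda>_. (lborel :: 'a measure))"
      proof (rule measurable_PiM_single')
        fix t assume t: "t \<in> {..<k j}"
        then have "e t \<in> {..<n}" using e' S_sub by (auto simp: bij_betw_def)
        then show "(\<lambda>\<omega>. T \<omega> t) \<in> M \<rightarrow>\<^sub>M lborel" using t unfolding T_def by simp
      qed (auto simp: T_def space_PiM PiE_def extensional_def)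
      then show ?thesis by simp
    qed
    have eq: "xi (k j) r (x ` S j) = xi (k j) r (T x ` {..<k j})" for x
    proof -
      have "T x ` {..<k j} = x ` (e ` {..<k j})" unfolding T_def by auto
      also have "\<dots> = x ` S j" using e' by (simp add: bij_betw_def)
      finally show ?thesis by simp
    qed
    show ?thesis
      unfolding eq using measurable_compose[OF Tm, of "\<lambda>y. xi (k j) r (y ` {..<k j})"] xi_meas j r by auto
  qed
  then show ?thesis unfolding F_def by (intro borel_measurable_prod) auto
qed

lemma xi_nonneg: "j < l \<Longrightarrow> r > 0 \<Longrightarrow> finite X \<Longrightarrow> 0 \<le> xi (k j) r X"
  using xi_adm unfolding admissible_functional_def by auto

lemma F_nonneg: "r > 0 \<Longrightarrow> 0 \<le> F r x"
  unfolding F_def using xi_nonneg finite_S by (intro prod_nonneg) auto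

lemma Y_meas: "Y \<in> M \<rightarrow>\<^sub>M M"
proof (rule meas_map)
  fix i assume "i \<in> {..<n}"
  then show "(\<lambda>x. Y x i) \<in> borel_measurable M" unfolding Y_def by (cases "i \<in> R") auto
next
  fix x :: "nat \<Rightarrow> 'a" and i assume "x \<in> extensional {..<n}" "i \<notin> {..<n}"
  then show "Y x i = undefined" unfolding Y_def R_def by (auto simp: extensional_def)
qed

lemma G_meas: "G \<in> borel_measurable M"
  unfolding G_def using measurable_compose[OF Y_meas F_meas[of 1]] by (simp add: comp_def)

lemma G_nonneg: "0 \<le> G x" unfolding G_def using F_nonneg by simp

lemma H_meas: "H r \<in> borel_measurable M"
proof -
  have "(\<lambda>x. q (x (rho i) + r *\<^sub>R Y x i)) \<in> borel_measurable M" if i: "i < n" for i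
  proof -
    have ri: "rho i \<in> {..<n}" using rho_lt[OF i] by simp
    have "(\<lambda>x. Y x i) \<in> borel_measurable M"
      using measurable_compose[OF Y_meas measurable_component_singleton[of i "{..<n}" "\<lambda>_. lborel"]] i
      by (simp add: comp_def)
    then have "(\<lambda>x. x (rho i) + r *\<^sub>R Y x i) \<in> borel_measurable M" using ri by measurable
    moreover have "q \<in> borel_measurable borel" using q_meas by simp
    ultimately show ?thesis by (rule measurable_compose)
  qed
  then show ?thesis unfolding H_def using G_meas by (intro borel_measurable_times borel_measurable_prod) auto
qed

lemma H_nonneg: "0 \<le> H r x"
  unfolding H_def using G_nonneg q_nonneg by (intro mult_nonneg_nonneg prod_nonneg) auto

lemma rhoN: "i \<in> N \<Longrightarrow> rho i \<in> {..<n} - N"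
  unfolding N_def using rho_lt rho_rho by auto

lemma in_R: "i < n \<Longrightarrow> i \<notin> N \<Longrightarrow> i \<in> R"
  unfolding N_def R_def by auto

lemma rho_R: "i < n \<Longrightarrow> rho i \<in> R"
  unfolding R_def using rho_lt rho_rho by auto

lemma scale_xi:
  assumes j: "j < l" and r: "r > 0" and X: "finite X"
  shows "xi (k j) r ((\<lambda>y. r *\<^sub>R y + c) ` X) = xi (k j) 1 X"
  using xi_adm j r X unfolding admissible_functional_def by auto

lemma FPhi:
  assumes r: "r > 0"
  shows "F r (Phi N rho r x) = G x"
proof -
  have "xi (k j) r (Phi N rho r x ` S j) = xi (k j) 1 (Y x ` S j)" if j: "j < l" for j
  proof -
    define c where "c = x (rho (SOME i. i \<in> S j))"
    have "Phi N rho r x ` S j = (\<lambda>y. r *\<^sub>R y + c) ` (Y x ` S j)"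
    proof -
      have pw: "Phi N rho r x i = r *\<^sub>R Y x i + c" if i: "i \<in> S j" for i
      proof -
        have "rho i = rho (SOME i. i \<in> S j)" using S_rho i by (metis someI)
        then have ci: "c = x (rho i)" unfolding c_def by simp
        have il: "i < n" using i S_def by auto
        show ?thesis
        proof (cases "i \<in> N")
          case True
          then have "i \<notin> R" unfolding N_def R_def by auto
          then show ?thesis using True ci unfolding Phi_def Y_def by (simp add: add.commute)
        next
          case False
          then have "i \<in> R" "rho i = i" using in_R[OF il] unfolding R_def by auto
          then show ?thesis using False ci unfolding Phi_def Y_def by simp
        qed
      qed
      show ?thesis unfolding image_image by (rule image_cong[OF refl pw])
    qed
    then show ?thesis using scale_xi[OF j r] finite_S by simp
  qed
  then show ?thesis unfolding F_def G_def by (intro prod.cong) auto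
qed

lemma qPhi: "(\<Prod>i<n. q (Phi N rho r x i)) = (\<Prod>i<n. q (x (rho i) + r *\<^sub>R Y x i))"
proof (intro prod.cong refl)
  fix i assume i: "i \<in> {..<n}"
  show "q (Phi N rho r x i) = q (x (rho i) + r *\<^sub>R Y x i)"
  proof (cases "i \<in> N")
    case True
    then have "i \<notin> R" unfolding N_def R_def by auto
    then show ?thesis using True unfolding Phi_def Y_def by simp
  next
    case False
    then have "i \<in> R" "rho i = i" using in_R[of i] i unfolding R_def by auto
    then show ?thesis using False unfolding Phi_def Y_def by simp
  qed
qed


lemma G_bound: "\<exists>Bx\<ge>0. \<forall>x. G x \<le> Bx"
proof -
  have "\<forall>j\<in>{..<l}. \<exists>B. \<forall>X. finite X \<longrightarrow> \<bar>xi (k j) 1 X\<bar> \<le> B"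
  proof
    fix j assume "j \<in> {..<l}"
    then have "admissible_functional (k j) (xi (k j))" using xi_adm by auto
    then show "\<exists>B. \<forall>X. finite X \<longrightarrow> \<bar>xi (k j) 1 X\<bar> \<le> B" unfolding admissible_functional_def by blast
  qed
  then obtain B where B: "\<And>j X. j < l \<Longrightarrow> finite X \<Longrightarrow> \<bar>xi (k j) 1 X\<bar> \<le> B j"
    by (metis lessThan_iff)
  have B0: "j < l \<Longrightarrow> 0 \<le> B j" for j using B[of j "{}"] by auto
  have "G x \<le> (\<Prod>j<l. B j)" for x
    unfolding G_def F_def
    using B finite_S xi_nonneg by (intro prod_mono) (auto simp: abs_le_iff)
  moreover have "0 \<le> (\<Prod>j<l. B j)" using B0 by (intro prod_nonneg) auto
  ultimately show ?thesis by blast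
qed

lemma G_support: "\<exists>D. \<forall>x. G x \<noteq> 0 \<longrightarrow> (\<forall>i\<in>N. norm (x i) \<le> D)"
proof -
  have "\<forall>j\<in>{..<l}. \<exists>rm>0. \<forall>X. finite X \<longrightarrow> diameter X > rm \<longrightarrow> xi (k j) 1 X = 0"
    using xi_adm unfolding admissible_functional_def by auto
  then obtain rm where rm: "\<And>j X. j < l \<Longrightarrow> finite X \<Longrightarrow> diameter X > rm j \<Longrightarrow> xi (k j) 1 X = 0"
    and rm0: "\<And>j. j < l \<Longrightarrow> rm j > 0"
    by (metis lessThan_iff)
  define Rm where "Rm = (\<Sum>j<l. rm j)"
  have rmR: "j < l \<Longrightarrow> rm j \<le> Rm" for j
    unfolding Rm_def using rm0 by (intro member_le_sum) (auto intro: less_imp_le)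
  have Rm0: "0 \<le> Rm" unfolding Rm_def using rm0 by (intro sum_nonneg) (auto intro: less_imp_le)
  have "\<forall>i. \<exists>m. i \<in> N \<longrightarrow> (rho i, i) \<in> Rel ^^ m"
    using rho_rel rtrancl_power by blast
  then obtain mm where mm: "\<And>i. i \<in> N \<Longrightarrow> (rho i, i) \<in> Rel ^^ mm i" by metis
  define D where "D = real (\<Sum>i<n. mm i) * Rm"
  have "\<forall>i\<in>N. norm (x i) \<le> D" if Gx: "G x \<noteq> 0" for x
  proof -
    have nz: "xi (k j) 1 (Y x ` S j) \<noteq> 0" if j: "j < l" for j
      using Gx j unfolding G_def F_def by auto
    have step: "dist (Y x a) (Y x b) \<le> Rm" if ab: "(a, b) \<in> Rel" for a b
    proof -
      obtain j where j: "j \<in> lab a" "j \<in> lab b" "a < n" "b < n" using ab unfolding Rel_def by auto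
      have jl: "j < l" using lab_sub[OF j(3)] j(1) by auto
      have inS: "a \<in> S j" "b \<in> S j" using j unfolding S_def by auto
      have "\<not> diameter (Y x ` S j) > rm j" using rm[OF jl] nz[OF jl] finite_S by auto
      moreover have "dist (Y x a) (Y x b) \<le> diameter (Y x ` S j)"
        using inS finite_S by (intro diameter_bounded_bound finite_imp_bounded) auto
      ultimately show ?thesis using rmR[OF jl] by linarith
    qed
    have path: "(a, b) \<in> Rel ^^ m \<Longrightarrow> dist (Y x a) (Y x b) \<le> real m * Rm" for m a b
    proof (induction m arbitrary: b)
      case 0
      then show ?case by simp
    next
      case (Suc m)
      then obtain c where c: "(a, c) \<in> Rel ^^ m" "(c, b) \<in> Rel" by auto
      have "dist (Y x a) (Y x b) \<le> dist (Y x a) (Y x c) + dist (Y x c) (Y x b)" by (rule dist_triangle)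
      also have "\<dots> \<le> real m * Rm + Rm" using Suc.IH[OF c(1)] step[OF c(2)] by linarith
      finally show ?case by (simp add: algebra_simps)
    qed
    show ?thesis
    proof
      fix i assume i: "i \<in> N"
      have "Y x (rho i) = 0" using rho_R[of i] i unfolding Y_def N_def by auto
      moreover have "Y x i = x i" using i unfolding Y_def N_def R_def by auto
      ultimately have "norm (x i) = dist (Y x (rho i)) (Y x i)" by (simp add: dist_norm)
      also have "\<dots> \<le> real (mm i) * Rm" using path[OF mm[OF i]] .
      also have "\<dots> \<le> D" unfolding D_def
        using i Rm0 by (intro mult_right_mono) (auto simp: N_def intro!: member_le_sum)
      finally show "norm (x i) \<le> D" .
    qed
  qed
  then show ?thesis by blast
qed

lemma q_int: "integrable lborel q"
  using q_meas q_nonneg q_prob unfolding integrable_iff_bounded by simp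

lemma dens_sf: "sigma_finite_measure (density lborel (\<lambda>z. ennreal (q z)))"
proof -
  have "prob_space (density lborel (\<lambda>z. ennreal (q z)))"
    using q_meas q_prob by (intro prob_spaceI) (simp add: emeasure_density)
  then show ?thesis by (rule prob_space_imp_sigma_finite)
qed

lemma card_NR: "card N + card R = n"
proof -
  have "N \<union> R = {..<n}" "N \<inter> R = {}" unfolding N_def R_def by auto
  moreover have "finite N" "finite R" unfolding N_def R_def by auto
  ultimately show ?thesis by (metis card_Un_disjoint card_lessThan)
qed

lemma int_eq:
  assumes r: "r > 0"
  shows "(\<integral>x. F r x \<partial>PiM {..<n} (\<lambda>_. density lborel (\<lambda>z. ennreal (q z))))
     = r ^ (DIM('a) * card N) * (\<integral>x. H r x \<partial>M)"
proof -
  let ?P = "PiM {..<n} (\<lambda>_::nat. density lborel (\<lambda>z. ennreal (q z)))"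
  let ?\<rho> = "\<lambda>x. \<Prod>i\<in>{..<n}. ennreal (q (x i))"
  have qb: "q \<in> borel_measurable borel" using q_meas by simp
  have sP: "sets ?P = sets M" by (intro sets_PiM_cong) auto
  have Fm: "F r \<in> borel_measurable ?P" using F_meas[OF r] measurable_cong_sets[OF sP] by blast
  have dm: "?\<rho> \<in> borel_measurable M" using qb by measurable
  have gm: "(\<lambda>x. ?\<rho> x * ennreal (F r x)) \<in> borel_measurable M"
    using dm F_meas[OF r] by measurable
  have "(\<integral>\<^sup>+x. ennreal (F r x) \<partial>?P) = (\<integral>\<^sup>+x. ennreal (F r x) \<partial>density M ?\<rho>)"
    using PiM_density_eq[OF _ qb dens_sf, of "{..<n}"] by simp
  also have "\<dots> = (\<integral>\<^sup>+x. ?\<rho> x * ennreal (F r x) \<partial>M)"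
    using dm F_meas[OF r] by (subst nn_integral_density) auto
  also have "\<dots> = ennreal (r ^ (DIM('a) * card N)) * (\<integral>\<^sup>+x. ?\<rho> (Phi N rho r x) * ennreal (F r (Phi N rho r x)) \<partial>M)"
    using rhoN r gm by (intro cvN) (auto simp: N_def)
  also have "(\<integral>\<^sup>+x. ?\<rho> (Phi N rho r x) * ennreal (F r (Phi N rho r x)) \<partial>M) = (\<integral>\<^sup>+x. ennreal (H r x) \<partial>M)"
  proof (intro nn_integral_cong)
    fix x
    have "?\<rho> (Phi N rho r x) = ennreal (\<Prod>i<n. q (Phi N rho r x i))"
      using q_nonneg by (simp add: prod_ennreal)
    then show "?\<rho> (Phi N rho r x) * ennreal (F r (Phi N rho r x)) = ennreal (H r x)"
      unfolding FPhi[OF r] H_def qPhi using G_nonneg q_nonneg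
      by (simp add: ennreal_mult'' prod_nonneg mult.commute)
  qed
  finally have e: "(\<integral>\<^sup>+x. ennreal (F r x) \<partial>?P) = ennreal (r ^ (DIM('a) * card N)) * (\<integral>\<^sup>+x. ennreal (H r x) \<partial>M)" .
  have "(\<integral>x. F r x \<partial>?P) = enn2real (\<integral>\<^sup>+x. ennreal (F r x) \<partial>?P)"
    using Fm F_nonneg[OF r] by (intro integral_eq_nn_integral) auto
  also have "\<dots> = r ^ (DIM('a) * card N) * enn2real (\<integral>\<^sup>+x. ennreal (H r x) \<partial>M)"
    unfolding e using r by (simp add: enn2real_mult)
  also have "enn2real (\<integral>\<^sup>+x. ennreal (H r x) \<partial>M) = (\<integral>x. H r x \<partial>M)"
    using H_meas H_nonneg by (intro integral_eq_nn_integral[symmetric]) auto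
  finally show ?thesis .
qed


lemma lim_H: "((\<lambda>r. \<integral>x. H r x \<partial>M) \<longlongrightarrow> (\<integral>x. H 0 x \<partial>M)) (at_right 0)"
proof -
  interpret L: product_sigma_finite "\<lambda>_::nat. (lborel :: 'a measure)" by (rule prod_sf)
  obtain Bx where Bx: "Bx \<ge> 0" "\<And>x. G x \<le> Bx" using G_bound by auto
  obtain D where D: "\<And>x i. G x \<noteq> 0 \<Longrightarrow> i \<in> N \<Longrightarrow> norm (x i) \<le> D" using G_support by blast
  obtain Bq where Bq: "\<And>x. q x \<le> Bq" using q_bdd by auto
  have Bq0: "0 \<le> Bq" using Bq[of 0] q_nonneg by (meson order_trans)
  define f where "f i = (if rho i = i then q else (\<lambda>z. Bq * indicator (cball 0 D) z))" for i
  define w where "w x = Bx * (\<Prod>i<n. f i (x i))" for x :: "nat \<Rightarrow> 'a"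
  have f_nonneg: "0 \<le> f i z" for i z unfolding f_def using q_nonneg Bq0 by auto
  have w_int: "integrable M w"
  proof -
    have "integrable lborel (f i)" for i
    proof (cases "rho i = i")
      case True then show ?thesis unfolding f_def using q_int by simp
    next
      case False
      have "integrable lborel (indicator (cball (0::'a) D) :: 'a \<Rightarrow> real)"
        using emeasure_lborel_cball_finite by (subst integrable_indicator_iff) auto
      then show ?thesis unfolding f_def using False by simp
    qed
    then have "integrable M (\<lambda>x. \<Prod>i<n. f i (x i))" by (intro L.product_integrable_prod) auto
    then show ?thesis unfolding w_def by (rule integrable_mult_right)
  qed
  have bound: "norm (H r x) \<le> w x" for r x
  proof -
    have wn: "0 \<le> w x" unfolding w_def using Bx f_nonneg by (intro mult_nonneg_nonneg prod_nonneg) auto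
    show ?thesis
    proof (cases "G x = 0")
      case True
      then show ?thesis using wn unfolding H_def by simp
    next
      case False
      have pm: "(\<Prod>i<n. q (x (rho i) + r *\<^sub>R Y x i)) \<le> (\<Prod>i<n. f i (x i))"
      proof (intro prod_mono conjI)
        fix i assume i: "i \<in> {..<n}"
        show "0 \<le> q (x (rho i) + r *\<^sub>R Y x i)" using q_nonneg by auto
        show "q (x (rho i) + r *\<^sub>R Y x i) \<le> f i (x i)"
        proof (cases "rho i = i")
          case True
          then have "Y x i = 0" using i unfolding Y_def R_def by auto
          then show ?thesis using True unfolding f_def by simp
        next
          case nr: False
          then have "i \<in> N" using i unfolding N_def by auto
          then have "norm (x i) \<le> D" using D False by auto
          then show ?thesis using nr Bq unfolding f_def by (simp add: dist_norm)
        qed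
      qed
      have "H r x \<le> Bx * (\<Prod>i<n. f i (x i))"
        unfolding H_def using Bx pm G_nonneg q_nonneg
        by (intro mult_mono) (auto intro: prod_nonneg)
      then show ?thesis using H_nonneg unfolding w_def by simp
    qed
  qed
  have ae: "AE x in M. \<forall>i\<in>{..<n}. isCont q (x i)"
    using AE_PiM_comp[OF _ _ q_cont] by (subst AE_finite_all) auto
  have lim: "AE x in M. ((\<lambda>t. H (inverse t) x) \<longlongrightarrow> H 0 x) at_top"
    using ae
  proof eventually_elim
    case (elim x)
    have "((\<lambda>t. q (x (rho i) + inverse t *\<^sub>R Y x i)) \<longlongrightarrow> q (x (rho i) + 0 *\<^sub>R Y x i)) at_top"
      if i: "i \<in> {..<n}" for i
    proof (rule isCont_tendsto_compose[where g = q])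
      show "isCont q (x (rho i) + 0 *\<^sub>R Y x i)" using elim rho_lt i by auto
      show "((\<lambda>t. x (rho i) + inverse t *\<^sub>R Y x i) \<longlongrightarrow> x (rho i) + 0 *\<^sub>R Y x i) at_top"
        by (intro tendsto_intros tendsto_inverse_0_at_top filterlim_ident)
    qed
    then show ?case unfolding H_def by (intro tendsto_intros) auto
  qed
  have "((\<lambda>t. \<integral>x. H (inverse t) x \<partial>M) \<longlongrightarrow> (\<integral>x. H 0 x \<partial>M)) at_top"
    using H_meas w_int lim bound
    by (intro integral_dominated_convergence_at_top[where w = w]) auto
  then show ?thesis by (simp add: filterlim_at_right_to_top)
qed

end

theorem lemma3p5:
  fixes l :: nat
    and I :: "nat set \<Rightarrow> nat"
    and k :: "nat \<Rightarrow> nat"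
    and lab :: "nat \<Rightarrow> nat set"
    and xi :: "nat \<Rightarrow> real \<Rightarrow> 'a::euclidean_space set \<Rightarrow> real"
    and q :: "'a \<Rightarrow> real"
  assumes k_def: "\<forall>j<l. k j = (\<Sum>J\<in>{J\<in>nonempty_subsets l. j \<in> J}. I J)"
    and k_ge2: "\<forall>j<l. 2 \<le> k j"
    and lab: "admissible_labelling l I lab"
    and xi_adm: "\<forall>j<l. admissible_functional (k j) (xi (k j))"
    and xi_meas: "\<forall>j<l. \<forall>r>0.
        (\<lambda>y. xi (k j) r (y ` {..<k j})) \<in> borel_measurable (PiM {..<k j} (\<lambda>_. lborel))"
    and q_meas: "q \<in> borel_measurable lborel"
    and q_nonneg: "\<forall>x. 0 \<le> q x"
    and q_prob: "(\<integral>\<^sup>+ x. ennreal (q x) \<partial>lborel) = 1"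
    and q_bdd: "\<exists>B. \<forall>x. q x \<le> B"
    and q_cont: "AE x in lborel. isCont q x"
  shows "\<exists>c\<ge>0. ((\<lambda>r. r powr (- (real DIM('a) * (real (pattern_size l I) - real (num_components l I))))
              * (\<integral>x. (\<Prod>j<l. xi (k j) r (split_set l I lab j x))
                   \<partial>(PiM {..<pattern_size l I} (\<lambda>_. density lborel (\<lambda>z. ennreal (q z))))))
            \<longlongrightarrow> c) (at_right 0)"
proof -
  interpret mainl l I lab k xi q
    using lab k_def k_ge2 xi_adm xi_meas q_meas q_nonneg q_prob q_bdd q_cont
    by (simp add: mainl_def mainl_axioms_def pat_def)
  have kk: "\<forall>j<l. 2 \<le> (\<Sum>J\<in>{J\<in>nonempty_subsets l. j \<in> J}. I J)" using k_def k_ge2 by auto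
  have nc: "num_components l I = card R" using card_roots[OF kk] unfolding R_def by simp
  have Feq: "(\<lambda>x. \<Prod>j<l. xi (k j) r (split_set l I lab j x)) = F r" for r
    unfolding F_def split_set_def S_def by simp
  have ev: "\<forall>\<^sub>F r in at_right 0. r powr (- (real DIM('a) * (real (pattern_size l I) - real (num_components l I))))
              * (\<integral>x. (\<Prod>j<l. xi (k j) r (split_set l I lab j x))
                   \<partial>(PiM {..<pattern_size l I} (\<lambda>_. density lborel (\<lambda>z. ennreal (q z))))) = (\<integral>x. H r x \<partial>M)"
    using eventually_at_right_less[of "0::real"]
  proof eventually_elim
    case (elim r)
    have c0: "real (card N) + real (card R) = real (pattern_size l I)"
      using card_NR by (metis of_nat_add)
    have ex: "real DIM('a) * (real (pattern_size l I) - real (num_components l I)) = real (DIM('a) * card N)"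
      using c0 nc by simp
    have p1: "r powr (- real (DIM('a) * card N)) * r ^ (DIM('a) * card N) = 1"
    proof -
      have p0: "r powr real (DIM('a) * card N) = r ^ (DIM('a) * card N)" using elim by (rule powr_realpow)
      show ?thesis unfolding powr_minus p0 using elim by simp
    qed
    have "r powr (- (real DIM('a) * (real (pattern_size l I) - real (num_components l I))))
              * (\<integral>x. (\<Prod>j<l. xi (k j) r (split_set l I lab j x))
                   \<partial>(PiM {..<pattern_size l I} (\<lambda>_. density lborel (\<lambda>z. ennreal (q z)))))
        = r powr (- real (DIM('a) * card N)) * (r ^ (DIM('a) * card N) * (\<integral>x. H r x \<partial>M))"
      unfolding Feq ex int_eq[OF elim] ..
    also have "\<dots> = (\<integral>x. H r x \<partial>M)" using p1 by (simp only: mult.assoc[symmetric] mult_1)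
    finally show ?case .
  qed
  have "0 \<le> (\<integral>x. H 0 x \<partial>M)" using H_nonneg by (simp add: integral_nonneg)
  moreover have "((\<lambda>r. r powr (- (real DIM('a) * (real (pattern_size l I) - real (num_components l I))))
              * (\<integral>x. (\<Prod>j<l. xi (k j) r (split_set l I lab j x))
                   \<partial>(PiM {..<pattern_size l I} (\<lambda>_. density lborel (\<lambda>z. ennreal (q z))))))
            \<longlongrightarrow> (\<integral>x. H 0 x \<partial>M)) (at_right 0)"
    using tendsto_cong[OF ev] lim_H by simp
  ultimately show ?thesis by blast
qed

end
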